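(* Let $q$ be a prime power and $m\geq 2$. Let $\Phi(x)=\sum_{i=0}^{2m}c_ix^{q^i}\in\mathbb{F}_q[x]$ with $c_{2m}=1$, $c_i=-c_{2m-i}$ for $0\le i\le m$, and $c_m=0$. Let \[L(x)=\Phi(x)+t^qx^{q^{m+1}}-tx^{q^{m-1}}\in\mathbb{F}_q(t)[x],\] let $E$ be a splitting field of $L$ over $\mathbb{F}_q(t)$, $G$ its Galois group, and $V$ the space of roots of $L$ in $E$. Let $f\in\mathbb{F}_q[x]$ be the unique polynomial with $f(0)=0$ and $f^q-f=x^{q^m}\Phi(x)$. Then the function $Q:V\to E$ defined by \[Q(\alpha)=t\alpha^{q^m+q^{m-1}}+f(\alpha)\] takes values in $\mathbb{F}_q$ and is a nondegenerate $\mathbb{F}_q$-valued quadratic form on $V$ that is $G$-invariant.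
   Context: Such a polynomial $f$ exists and is unique (it is monic of degree $q^{m-1}(q^m+1)$). The roots of $L$ form a $2m$-dimensional $\mathbb{F}_q$-vector space $V$. A function $Q:V\to\mathbb{F}_q$ is a quadratic form if $Q(\lambda v)=\lambda^2Q(v)$ for $\lambda\in\mathbb{F}_q$ and $Q(u+w)=Q(u)+Q(w)+C(u,w)$ for a symmetric bilinear form $C$ (its polarization); $Q$ is nondegenerate if $C$ is nondegenerate. $G$-invariant means $Q(\sigma\alpha)=Q(\alpha)$ for all $\sigma\in G$, $\alpha\in V$. *)

theory Defs
  imports "HOL-Computational_Algebra.Polynomial_Factorial"
begin

definition field_hom :: "('a::field \<Rightarrow> 'b::field) \<Rightarrow> bool" where
  "field_hom h \<longleftrightarrow> h 1 = 1 \<and> (\<forall>x y. h (x + y) = h x + h y \<and> h (x * y) = h x * h y)"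

definition is_subfield :: "'a::field set \<Rightarrow> bool" where
  "is_subfield S \<longleftrightarrow> 0 \<in> S \<and> 1 \<in> S \<and>
     (\<forall>x\<in>S. \<forall>y\<in>S. x + y \<in> S \<and> x * y \<in> S) \<and>
     (\<forall>x\<in>S. - x \<in> S \<and> inverse x \<in> S)"

definition splits :: "'a::field poly \<Rightarrow> bool" where
  "splits p \<longleftrightarrow> (\<exists>rs. p = smult (lead_coeff p) (\<Prod>r\<leftarrow>rs. [:- r, 1:]))"

text \<open>E (the whole type 'e, via the embedding i of the base field) is a splitting
  field of p over the base field: p splits in E and E is generated over i(K) by the roots of p.\<close>
definition is_splitting_field :: "('k::field \<Rightarrow> 'e::field) \<Rightarrow> 'k poly \<Rightarrow> bool" where
  "is_splitting_field i p \<longleftrightarrow> field_hom i \<and> p \<noteq> 0 \<and> splits (map_poly i p) \<and>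
     (\<forall>S. is_subfield S \<and> range i \<subseteq> S \<and> {a. poly (map_poly i p) a = 0} \<subseteq> S \<longrightarrow> S = UNIV)"

definition galois_group :: "('k::field \<Rightarrow> 'e::field) \<Rightarrow> ('e \<Rightarrow> 'e) set" where
  "galois_group i = {\<sigma>. bij \<sigma> \<and> field_hom \<sigma> \<and> (\<forall>x. \<sigma> (i x) = i x)}"

definition bilinear_on :: "'v set \<Rightarrow> ('s \<Rightarrow> 'v \<Rightarrow> 'v::plus) \<Rightarrow> ('v \<Rightarrow> 'v \<Rightarrow> 's::comm_ring_1) \<Rightarrow> bool" where
  "bilinear_on V sc C \<longleftrightarrow>
     (\<forall>u\<in>V. \<forall>v\<in>V. \<forall>w\<in>V. C (u + v) w = C u w + C v w \<and> C w (u + v) = C w u + C w v) \<and>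
     (\<forall>a. \<forall>u\<in>V. \<forall>w\<in>V. C (sc a u) w = a * C u w \<and> C w (sc a u) = a * C w u)"

definition quadratic_form_on :: "'v set \<Rightarrow> ('s \<Rightarrow> 'v \<Rightarrow> 'v::plus) \<Rightarrow> ('v \<Rightarrow> 's::comm_ring_1) \<Rightarrow> bool" where
  "quadratic_form_on V sc Q \<longleftrightarrow>
     (\<forall>a. \<forall>v\<in>V. Q (sc a v) = a ^ 2 * Q v) \<and>
     (\<exists>C. bilinear_on V sc C \<and> (\<forall>u\<in>V. \<forall>w\<in>V. C u w = C w u) \<and>
          (\<forall>u\<in>V. \<forall>w\<in>V. Q (u + w) = Q u + Q w + C u w))"

text \<open>Nondegenerate: the polarization (which is uniquely determined by Q) is nondegenerate.\<close>
definition nondegenerate_quadratic_form_on :: "'v set \<Rightarrow> ('s \<Rightarrow> 'v \<Rightarrow> 'v::{plus,zero}) \<Rightarrow> ('v \<Rightarrow> 's::comm_ring_1) \<Rightarrow> bool" where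
  "nondegenerate_quadratic_form_on V sc Q \<longleftrightarrow>
     (\<exists>C. bilinear_on V sc C \<and> (\<forall>u\<in>V. \<forall>w\<in>V. C u w = C w u) \<and>
          (\<forall>u\<in>V. \<forall>w\<in>V. Q (u + w) = Q u + Q w + C u w) \<and>
          (\<forall>u\<in>V. (\<forall>w\<in>V. C u w = 0) \<longrightarrow> u = 0))"

end

theory Submission
  imports Defs
begin


lemma fh_add: "field_hom h \<Longrightarrow> h (x + y) = h x + h y" by (simp add: field_hom_def)
lemma fh_mult: "field_hom h \<Longrightarrow> h (x * y) = h x * h y" by (simp add: field_hom_def)
lemma fh_1: "field_hom h \<Longrightarrow> h 1 = 1" by (simp add: field_hom_def)
lemma fh_0: "field_hom h \<Longrightarrow> h 0 = 0"
proof -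
  assume a: "field_hom h"
  have "h 0 + h 0 = h 0 + 0" using fh_add[OF a, of 0 0] by simp
  then show "h 0 = 0" by (rule add_left_imp_eq)
qed
lemma fh_uminus: "field_hom h \<Longrightarrow> h (- x) = - h x"
  using fh_add[of h x "-x"] fh_0[of h] by (metis minus_unique add.right_inverse)
lemma fh_diff: "field_hom h \<Longrightarrow> h (x - y) = h x - h y"
  using fh_add[of h x "-y"] fh_uminus[of h y] by simp
lemma fh_power: "field_hom h \<Longrightarrow> h (x ^ n) = h x ^ n"
  by (induction n) (simp_all add: fh_1 fh_mult)
lemma fh_of_nat: "field_hom h \<Longrightarrow> h (of_nat n) = of_nat n"
  by (induction n) (simp_all add: fh_1 fh_add fh_0)
lemma fh_sum: "field_hom h \<Longrightarrow> h (sum g A) = (\<Sum>a\<in>A. h (g a))"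
  by (induction A rule: infinite_finite_induct) (simp_all add: fh_add fh_0)
lemma fh_eq0: "field_hom h \<Longrightarrow> h x = 0 \<Longrightarrow> x = 0"
  by (metis fh_1 fh_mult mult_zero_left right_inverse zero_neq_one)
lemma fh_inj: "field_hom h \<Longrightarrow> h x = h y \<Longrightarrow> x = y"
  using fh_eq0[of h "x - y"] fh_diff[of h x y] by simp
lemma fh_comp: "field_hom g \<Longrightarrow> field_hom h \<Longrightarrow> field_hom (g \<circ> h)"
  by (simp add: field_hom_def)

lemma fh_map_poly_add: "field_hom h \<Longrightarrow> map_poly h (p + q) = map_poly h p + map_poly h q"
  by (intro poly_eqI) (simp add: coeff_map_poly fh_0 fh_add)
lemma fh_map_poly_diff: "field_hom h \<Longrightarrow> map_poly h (p - q) = map_poly h p - map_poly h q"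
  by (intro poly_eqI) (simp add: coeff_map_poly fh_0 fh_diff)
lemma fh_map_poly_sum: "field_hom h \<Longrightarrow> map_poly h (sum g A) = (\<Sum>a\<in>A. map_poly h (g a))"
  by (induction A rule: infinite_finite_induct) (simp_all add: fh_map_poly_add)
lemma fh_map_poly_monom: "field_hom h \<Longrightarrow> map_poly h (monom c n) = monom (h c) n"
  by (simp add: map_poly_monom fh_0)
lemma fh_map_poly_mult: "field_hom h \<Longrightarrow> map_poly h (p * q) = map_poly h p * map_poly h q"
proof (induction p rule: pCons_induct)
  case 0 then show ?case by simp
next
  case (pCons a p)
  then show ?case
    by (simp add: fh_map_poly_add map_poly_smult fh_0 fh_mult map_poly_pCons)
qed
lemma fh_map_poly_power: "field_hom h \<Longrightarrow> map_poly h (p ^ n) = map_poly h p ^ n"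
  by (induction n) (simp_all add: fh_map_poly_mult fh_1)

lemma fh_poly_map: "field_hom g \<Longrightarrow> field_hom h \<Longrightarrow>
   g (poly (map_poly h p) x) = poly (map_poly (g \<circ> h) p) (g x)"
proof (induction p rule: pCons_induct)
  case 0 then show ?case by (simp add: fh_0)
next
  case (pCons a p)
  then show ?case
    by (simp add: map_poly_pCons fh_0 fh_add fh_mult)
qed

lemma frob_binom:
  fixes x y :: "'a::comm_ring_1"
  assumes "\<forall>i. 0 < i \<and> i < n \<longrightarrow> (of_nat (n choose i) :: 'a) = 0" "n > 0"
  shows "(x + y) ^ n = x ^ n + y ^ n"
proof -
  have "(x + y) ^ n = (\<Sum>k\<le>n. of_nat (n choose k) * x ^ k * y ^ (n - k))"
    by (rule binomial_ring)
  also have "\<dots> = (\<Sum>k\<le>n. (if k = 0 then y ^ n else 0) + (if k = n then x ^ n else 0))"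
    using assms by (intro sum.cong) auto
  also have "\<dots> = x ^ n + y ^ n" by (simp add: sum.distrib)
  finally show ?thesis .
qed

lemma finite_field_pow_card:
  fixes x :: "'k::{field,finite}"
  shows "x ^ card (UNIV :: 'k set) = x"
proof (cases "x = 0")
  case True
  have "card (UNIV :: 'k set) > 0" by (simp add: finite_UNIV_card_ge_0)
  with True show ?thesis by simp
next
  case False
  define S where "S = (UNIV :: 'k set) - {0}"
  have fin: "finite S" by (simp add: S_def)
  have bij: "bij_betw (\<lambda>y. x * y) S S"
  proof -
    have "y \<in> (\<lambda>y. x * y) ` S" if "y \<in> S" for y
      using that False unfolding S_def by (intro image_eqI[of _ _ "inverse x * y"]) auto
    then show ?thesis unfolding bij_betw_def inj_on_def S_def using False by auto
  qed
  have "(\<Prod>y\<in>S. x * y) = (\<Prod>y\<in>S. y)"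
    using prod.reindex_bij_betw[OF bij, of "\<lambda>y. y"] by simp
  moreover have "(\<Prod>y\<in>S. x * y) = x ^ card S * (\<Prod>y\<in>S. y)"
    by (simp add: prod.distrib)
  moreover have "(\<Prod>y\<in>S. y) \<noteq> 0" using fin by (simp add: S_def)
  ultimately have "x ^ card S = 1" by simp
  moreover have "card (UNIV :: 'k set) = Suc (card S)"
    unfolding S_def by (simp add: card_Diff_singleton card_gt_0_iff)
  ultimately show ?thesis by simp
qed




lemma frob_uminus:
  fixes x :: "'a::comm_ring_1"
  assumes F: "\<And>x y::'a. (x + y) ^ q = x ^ q + y ^ q" and q: "q > 0"
  shows "(- x) ^ q = - (x ^ q)"
proof -
  have "0 = (x + - x) ^ q" using q by (simp add: zero_power)
  also have "\<dots> = x ^ q + (- x) ^ q" by (rule F)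
  finally show ?thesis by (metis minus_unique)
qed

lemma frob_diff:
  fixes x :: "'a::comm_ring_1"
  assumes F: "\<And>x y::'a. (x + y) ^ q = x ^ q + y ^ q" and q: "q > 0"
  shows "(x - y) ^ q = x ^ q - y ^ q"
  using F[of x "-y"] frob_uminus[OF F q, of y] by simp

lemma frob_sum:
  fixes g :: "'b \<Rightarrow> 'a::comm_ring_1"
  assumes F: "\<And>x y::'a. (x + y) ^ q = x ^ q + y ^ q" and q: "q > 0"
  shows "(sum g A) ^ q = (\<Sum>a\<in>A. g a ^ q)"
  by (induction A rule: infinite_finite_induct) (simp_all add: F q zero_power)

lemma frob_iter:
  fixes x :: "'a::comm_ring_1"
  assumes F: "\<And>x y::'a. (x + y) ^ q = x ^ q + y ^ q"
  shows "(x + y) ^ (q ^ n) = x ^ (q ^ n) + y ^ (q ^ n)"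
proof (induction n)
  case 0 then show ?case by simp
next
  case (Suc n)
  have "(x + y) ^ (q ^ Suc n) = ((x + y) ^ (q ^ n)) ^ q" by (simp only: power_Suc2 power_mult)
  also have "\<dots> = x ^ (q ^ Suc n) + y ^ (q ^ Suc n)"
    by (simp only: Suc F power_Suc2 power_mult)
  finally show ?case .
qed

lemma pderiv_sum: "pderiv (sum g A) = (\<Sum>a\<in>A. pderiv (g a))"
  by (induction A rule: infinite_finite_induct) (simp_all add: pderiv_add)

lemma binom_vanish_finite_field:
  assumes "0 < i" "i < card (UNIV :: 'k::{field,finite} set)"
  shows "(of_nat (card (UNIV :: 'k set) choose i) :: 'k) = 0"
proof -
  define q where "q = card (UNIV :: 'k set)"
  have q1: "q \<ge> 1" unfolding q_def by (simp add: Suc_leI finite_UNIV_card_ge_0)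
  define R :: "'k poly" where "R = [:1, 1:] ^ q - monom 1 q - 1"
  have roots: "poly R a = 0" for a
    using finite_field_pow_card[of "1 + a"] finite_field_pow_card[of a]
    by (simp add: R_def poly_monom q_def)
  have "R = 0"
  proof (rule ccontr)
    assume nz: "R \<noteq> 0"
    have dl: "degree ([:1, 1::'k:] ^ q) \<le> q"
      using degree_power_le[of "[:1, 1::'k:]" q] by simp
    have "degree R \<le> q - 1"
    proof (rule degree_le, intro allI impI)
      fix n assume n: "q - 1 < n"
      show "coeff R n = 0"
      proof (cases "n = q")
        case True
        then show ?thesis using q1
          by (simp add: R_def coeff_linear_poly_power)
      next
        case False
        then have "n > q" using n by simp
        then have "coeff ([:1, 1::'k:] ^ q) n = 0" using dl by (intro coeff_eq_0) simp
        then show ?thesis using False \<open>n > q\<close> by (simp add: R_def)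
      qed
    qed
    moreover have "card {x. poly R x = 0} \<le> degree R" by (rule card_poly_roots_bound[OF nz])
    moreover have "{x. poly R x = 0} = UNIV" using roots by auto
    ultimately have "q \<le> degree R" "degree R \<le> q - 1" unfolding q_def by simp_all
    with q1 show False by linarith
  qed
  then have "coeff R i = 0" by simp
  moreover have "coeff R i = of_nat (q choose i)"
    using assms unfolding q_def[symmetric]
    by (simp add: R_def coeff_linear_poly_power)
  ultimately show ?thesis by (simp add: q_def)
qed

lemma card_field_ge2: "card (UNIV :: 'k::{field,finite} set) \<ge> 2"
proof -
  have "card {0::'k, 1} \<le> card (UNIV :: 'k set)" by (rule card_mono) auto
  then show ?thesis by simp
qed



locale thm48 =
  fixes c :: "nat \<Rightarrow> 'k::{field,finite}"
    and m :: nat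
    and \<iota> :: "'k poly fract \<Rightarrow> 'e::field"
    and f :: "'k poly"
    and q :: nat and \<Phi> :: "'k poly" and t :: "'k poly fract" and L :: "'k poly fract poly"
    and V :: "'e set" and \<kappa> :: "'k \<Rightarrow> 'e" and Q :: "'e \<Rightarrow> 'e"
  assumes q_def: "q = card (UNIV :: 'k set)"
    and \<Phi>_def: "\<Phi> = (\<Sum>i\<le>2*m. monom (c i) (q ^ i))"
    and t_def: "t = to_fract [:0, 1:]"
    and L_def: "L = (\<Sum>i\<le>2*m. monom (to_fract [:c i:]) (q ^ i))
                + monom (t ^ q) (q ^ (m + 1)) - monom t (q ^ (m - 1))"
    and V_def: "V = {\<alpha>::'e. poly (map_poly \<iota> L) \<alpha> = 0}"
    and \<kappa>_def: "\<kappa> = (\<lambda>a::'k. \<iota> (to_fract [:a:]))"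
    and Q_def: "Q = (\<lambda>\<alpha>::'e. \<iota> t * \<alpha> ^ (q ^ m + q ^ (m - 1)) + poly (map_poly \<kappa> f) \<alpha>)"
    and m2: "m \<ge> 2"
    and c_top: "c (2*m) = 1"
    and c_anti: "\<forall>i\<le>m. c i = - c (2*m - i)"
    and c_mid: "c m = 0"
    and f0: "poly f 0 = 0"
    and f_eq: "f ^ q - f = monom 1 (q ^ m) * \<Phi>"
    and split: "is_splitting_field \<iota> L"
begin

lemma q2: "q \<ge> 2" using card_field_ge2 q_def by simp
lemma qpos: "q > 0" using q2 by simp
lemma q1: "1 < q" using q2 by simp

lemma binom_k: "0 < i \<Longrightarrow> i < q \<Longrightarrow> (of_nat (q choose i) :: 'k) = 0"
  using binom_vanish_finite_field q_def by blast

lemma of_nat_q_k: "(of_nat q :: 'k) = 0"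
  using binom_k[of 1] q2 by simp

lemma pow_q_k: "(a::'k) ^ q = a"
  using finite_field_pow_card q_def by simp

lemma pow_qn_k: "(a::'k) ^ (q ^ n) = a"
  by (induction n) (simp_all add: power_Suc2 power_mult pow_q_k)

lemma hom_iota: "field_hom \<iota>"
  using split by (simp add: is_splitting_field_def)

lemma hom_kappa: "field_hom \<kappa>"
proof -
  have a: "[:x + y:] = [:x:] + [:y:]" for x y :: 'k by simp
  have b: "[:x * y:] = [:x:] * [:y:]" for x y :: 'k by simp
  show ?thesis
    using hom_iota unfolding \<kappa>_def field_hom_def
    by (auto simp only: one_pCons[symmetric] a b to_fract_add to_fract_mult to_fract_1)
qed

lemma of_nat_e: "(of_nat n :: 'e) = \<kappa> (of_nat n)"
  using fh_of_nat[OF hom_kappa] by simp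

lemma binom_e: "0 < i \<Longrightarrow> i < q \<Longrightarrow> (of_nat (q choose i) :: 'e) = 0"
  by (simp add: of_nat_e binom_k fh_0[OF hom_kappa])

lemma of_nat_q_e: "(of_nat q :: 'e) = 0"
  by (simp add: of_nat_e of_nat_q_k fh_0[OF hom_kappa])

lemma frob_e: "((x::'e) + y) ^ q = x ^ q + y ^ q"
  using frob_binom[of q x y] binom_e qpos by blast

lemma frob_kp: "((x::'k poly) + y) ^ q = x ^ q + y ^ q"
proof -
  have "\<forall>i. 0 < i \<and> i < q \<longrightarrow> (of_nat (q choose i) :: 'k poly) = 0"
    by (simp add: of_nat_poly binom_k)
  then show ?thesis using frob_binom[of q x y] qpos by blast
qed

lemma frob_qn_e: "((x::'e) + y) ^ (q ^ n) = x ^ (q ^ n) + y ^ (q ^ n)"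
  by (rule frob_iter[OF frob_e])

lemma kappa_pow: "\<kappa> a ^ (q ^ n) = \<kappa> a"
  by (simp add: fh_power[OF hom_kappa, symmetric] pow_qn_k)

lemma kappa_pow_q: "\<kappa> a ^ q = \<kappa> a"
  using kappa_pow[of a 1] by simp

lemma smul_pow: "(\<kappa> a * x) ^ (q ^ n) = \<kappa> a * x ^ (q ^ n)"
  by (simp add: power_mult_distrib kappa_pow)

end


context thm48 begin

abbreviation "T \<equiv> \<iota> t"
abbreviation "P \<equiv> map_poly \<iota> L"

lemma P_expand: "P = (\<Sum>i\<le>2*m. monom (\<kappa> (c i)) (q^i)) + monom (T^q) (q^(m+1)) - monom T (q^(m-1))"
  using hom_iota
  by (simp add: L_def fh_map_poly_add fh_map_poly_diff fh_map_poly_sum fh_map_poly_monom fh_power \<kappa>_def)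

lemma poly_P: "poly P x = (\<Sum>i\<le>2*m. \<kappa> (c i) * x^(q^i)) + T^q * x^(q^(m+1)) - T * x^(q^(m-1))"
  by (simp add: P_expand poly_sum poly_monom)

lemma V_iff: "x \<in> V \<longleftrightarrow> poly P x = 0" by (simp add: V_def)

lemma poly_P_add: "poly P (x + y) = poly P x + poly P y"
  by (simp add: poly_P frob_qn_e algebra_simps sum.distrib del: power_Suc)

lemma poly_P_smul: "poly P (\<kappa> a * x) = \<kappa> a * poly P x"
  by (simp add: poly_P smul_pow kappa_pow algebra_simps sum_distrib_left del: power_Suc)

lemma V_add: "x \<in> V \<Longrightarrow> y \<in> V \<Longrightarrow> x + y \<in> V"
  by (simp add: V_iff poly_P_add)

lemma V_smul: "x \<in> V \<Longrightarrow> \<kappa> a * x \<in> V"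
  by (simp add: V_iff poly_P_smul)

lemma coeff_P: "coeff P n = (\<Sum>i\<le>2*m. if q^i = n then \<kappa> (c i) else 0)
    + (if q^(m+1) = n then T^q else 0) - (if q^(m-1) = n then T else 0)"
  by (simp add: P_expand coeff_sum)

lemma coeff_P_top: "coeff P (q^(2*m)) = 1"
proof -
  have "(\<Sum>i\<le>2*m. if q^i = q^(2*m) then \<kappa> (c i) else 0) = (\<Sum>i\<le>2*m. if i = 2*m then \<kappa> (c i) else 0)"
    using q1 by (intro sum.cong) auto
  also have "\<dots> = \<kappa> (c (2*m))" by simp
  also have "\<dots> = 1" using c_top fh_1[OF hom_kappa] by simp
  finally show ?thesis using q1 m2 by (simp add: coeff_P del: power_Suc)
qed

lemma coeff_P_high: "n > q^(2*m) \<Longrightarrow> coeff P n = 0"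
proof -
  assume n: "n > q^(2*m)"
  have le: "q ^ i \<le> q^(2*m)" if "i \<le> 2*m" for i
    using that q1 by (intro power_increasing) auto
  have s0: "(\<Sum>i\<le>2*m. if q^i = n then \<kappa> (c i) else 0) = (\<Sum>i\<le>2*m. 0)"
    using le n by (intro sum.cong) fastforce+
  have "m + 1 \<le> 2 * m" "m - 1 \<le> 2 * m" using m2 by auto
  then have "q^(m+1) \<noteq> n" "q^(m-1) \<noteq> n" using le[of "m+1"] le[of "m-1"] n by (auto simp del: power_Suc)
  with s0 show ?thesis by (simp add: coeff_P del: power_Suc)
qed

lemma degree_P: "degree P = q^(2*m)"
proof (rule antisym)
  show "degree P \<le> q^(2*m)" using coeff_P_high by (intro degree_le) auto
  show "q^(2*m) \<le> degree P" using coeff_P_top by (intro le_degree) simp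
qed

lemma lead_P: "lead_coeff P = 1" using degree_P coeff_P_top by simp

lemma poly_pderiv_P: "poly (pderiv P) x = -1"
proof -
  have "poly (pderiv P) x = (\<Sum>i\<le>2*m. of_nat q ^ i * \<kappa> (c i) * x ^ (q^i - 1))"
    using m2 by (simp add: P_expand pderiv_add pderiv_diff pderiv_sum pderiv_monom poly_sum poly_monom of_nat_q_e)
  also have "\<dots> = (\<Sum>i\<le>2*m. if i = 0 then \<kappa> (c 0) else 0)"
    by (intro sum.cong) (auto simp: of_nat_q_e)
  also have "\<dots> = \<kappa> (c 0)" by simp
  also have "\<dots> = -1"
    using c_anti c_top fh_uminus[OF hom_kappa] fh_1[OF hom_kappa] by simp
  finally show ?thesis .
qed

lemma prod_list_factor:
  fixes g :: "'a \<Rightarrow> 'b::comm_monoid_mult"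
  assumes "x \<in> set xs"
  obtains S where "prod_list (map g xs) = g x * S"
  using assms
proof (induction xs arbitrary: thesis)
  case Nil then show ?case by simp
next
  case (Cons y ys)
  show ?case
  proof (cases "y = x")
    case True then show ?thesis using Cons.prems(1)[of "prod_list (map g ys)"] by simp
  next
    case False
    then have "x \<in> set ys" using Cons.prems(2) by simp
    then obtain S where "prod_list (map g ys) = g x * S" using Cons.IH by blast
    then show ?thesis using Cons.prems(1)[of "g y * S"] by (simp add: mult_ac)
  qed
qed

lemma nondistinct_square:
  "\<not> distinct rs \<Longrightarrow> \<exists>a R. (\<Prod>r\<leftarrow>rs. [:-r, 1::'e:]) = [:-a, 1:]^2 * R"
proof (induction rs)
  case Nil then show ?case by simp
next
  case (Cons x xs)
  show ?case
  proof (cases "x \<in> set xs")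
    case True
    then obtain S where S: "(\<Prod>r\<leftarrow>xs. [:-r, 1::'e:]) = [:-x, 1:] * S"
      by (rule prod_list_factor)
    have "(\<Prod>r\<leftarrow>x#xs. [:-r, 1::'e:]) = [:-x, 1:] * (\<Prod>r\<leftarrow>xs. [:-r, 1::'e:])" by simp
    also have "\<dots> = [:-x, 1:]^2 * S" by (simp only: S power2_eq_square mult.assoc)
    finally show ?thesis by blast
  next
    case False
    then have "\<not> distinct xs" using Cons.prems by simp
    then obtain a R where R: "(\<Prod>r\<leftarrow>xs. [:-r, 1::'e:]) = [:-a, 1:]^2 * R" using Cons.IH by blast
    have "(\<Prod>r\<leftarrow>x#xs. [:-r, 1::'e:]) = [:-x, 1:] * (\<Prod>r\<leftarrow>xs. [:-r, 1::'e:])" by simp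
    also have "\<dots> = [:-a, 1:]^2 * ([:-x, 1:] * R)" by (simp only: R mult_ac)
    finally show ?thesis by blast
  qed
qed

lemma poly_prod_lin: "poly (\<Prod>r\<leftarrow>rs. [:-r, 1::'e:]) x = 0 \<longleftrightarrow> x \<in> set rs"
  by (induction rs) auto

lemma degree_prod_lin: "degree (\<Prod>r\<leftarrow>rs. [:-r, 1::'e:]) = length rs"
proof (induction rs)
  case Nil then show ?case by simp
next
  case (Cons x xs)
  have nz: "(\<Prod>r\<leftarrow>xs. [:-r, 1::'e:]) \<noteq> 0" by (auto simp: prod_list_zero_iff)
  have "(\<Prod>r\<leftarrow>x#xs. [:-r, 1::'e:]) = [:-x, 1:] * (\<Prod>r\<leftarrow>xs. [:-r, 1::'e:])" by simp
  also have "degree \<dots> = 1 + length xs" using nz Cons by (subst degree_mult_eq) auto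
  finally show ?case by simp
qed

lemma card_V: "card V = q^(2*m)"
proof -
  from split have "splits P" by (simp add: is_splitting_field_def)
  then obtain rs where rs: "P = (\<Prod>r\<leftarrow>rs. [:-r, 1:])"
    unfolding splits_def using lead_P by auto
  have "distinct rs"
  proof (rule ccontr)
    assume "\<not> distinct rs"
    then obtain a R where aR: "P = [:-a, 1:]^2 * R" using nondistinct_square rs by metis
    define p where "p = [:-a, 1::'e:]"
    have pa: "poly p a = 0" by (simp add: p_def)
    have "poly (pderiv P) a = 0"
      unfolding aR p_def[symmetric] numeral_2_eq_2
      by (simp only: pderiv_mult pderiv_power_Suc poly_mult poly_add poly_smult poly_power pa) simp
    with poly_pderiv_P show False by simp
  qed
  have "V = set rs"
    unfolding V_def rs by (auto simp: poly_prod_lin)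
  then have "card V = length rs" using \<open>distinct rs\<close> by (simp add: distinct_card)
  also have "\<dots> = degree P" using rs degree_prod_lin by simp
  finally show ?thesis using degree_P by simp
qed

lemma finite_V: "finite V"
  using card_V q1 by (intro card_ge_0_finite) simp

end


lemma sum_split_center:
  fixes h :: "nat \<Rightarrow> 'a::comm_monoid_add"
  shows "(\<Sum>i\<le>2*m. h i) = h m + (\<Sum>j\<in>{1..m}. h (m+j)) + (\<Sum>j\<in>{1..m}. h (m-j))"
proof -
  have A: "{..2*m} = {m} \<union> ((\<lambda>j. m+j) ` {1..m} \<union> (\<lambda>j. m-j) ` {1..m})"
  proof (intro equalityI subsetI)
    fix i assume i: "i \<in> {..2*m}"
    show "i \<in> {m} \<union> ((\<lambda>j. m+j) ` {1..m} \<union> (\<lambda>j. m-j) ` {1..m})"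
    proof (cases "i = m")
      case False
      show ?thesis
      proof (cases "i > m")
        case True
        then have "i = m + (i - m)" "i - m \<in> {1..m}" using i by auto
        then show ?thesis by blast
      next
        case False
        then have "i = m - (m - i)" "m - i \<in> {1..m}" using i \<open>i \<noteq> m\<close> by auto
        then show ?thesis by blast
      qed
    qed simp
  qed auto
  have d1: "(\<lambda>j. m+j) ` {1..m} \<inter> (\<lambda>j. m-j) ` {1..m} = {}" by auto
  have d2: "{m} \<inter> ((\<lambda>j. m+j) ` {1..m} \<union> (\<lambda>j. m-j) ` {1..m}) = {}" by auto
  have i1: "inj_on (\<lambda>j. m+j) {1..m}" by (auto simp: inj_on_def)
  have i2: "inj_on (\<lambda>j. m-j) {1..m}" by (auto simp: inj_on_def)
  show ?thesis
    unfolding A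
    by (subst sum.union_disjoint[OF _ _ d2], simp, simp,
        subst sum.union_disjoint[OF _ _ d1], simp, simp)
       (simp only: sum.reindex[OF i1] sum.reindex[OF i2] o_def add.assoc sum.insert_if finite.emptyI sum.empty empty_iff if_False add_0_right)
qed

context thm48 begin

definition gt :: "nat \<Rightarrow> nat \<Rightarrow> 'k poly" where
  "gt j k = monom (c (m+j)) (q^k + q^(k+j))"

definition fe :: "'k poly" where
  "fe = (\<Sum>j\<in>{1..m}. \<Sum>k\<in>{m-j..<m}. gt j k)"

lemma gt_pow: "gt j k ^ q = gt j (Suc k)"
  by (simp add: gt_def monom_power pow_q_k algebra_simps del: power_Suc)
     (simp add: power_Suc2 mult.commute)

lemma fe_pow: "fe ^ q = (\<Sum>j\<in>{1..m}. \<Sum>k\<in>{m-j..<m}. gt j (Suc k))"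
proof -
  have "fe ^ q = (\<Sum>j\<in>{1..m}. (\<Sum>k\<in>{m-j..<m}. gt j k) ^ q)"
    unfolding fe_def by (rule frob_sum[OF frob_kp qpos])
  also have "\<dots> = (\<Sum>j\<in>{1..m}. \<Sum>k\<in>{m-j..<m}. gt j k ^ q)"
    by (intro sum.cong refl frob_sum[OF frob_kp qpos])
  finally show ?thesis by (simp only: gt_pow)
qed

lemma fe_eq: "fe ^ q - fe = monom 1 (q ^ m) * \<Phi>"
proof -
  have "fe ^ q - fe = (\<Sum>j\<in>{1..m}. \<Sum>k\<in>{m-j..<m}. gt j (Suc k) - gt j k)"
    by (simp only: fe_pow) (simp add: fe_def sum_subtractf)
  also have "\<dots> = (\<Sum>j\<in>{1..m}. gt j m - gt j (m-j))"
    by (intro sum.cong refl sum_Suc_diff') auto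
  also have "\<dots> = monom 1 (q ^ m) * \<Phi>"
  proof -
    have "monom 1 (q ^ m) * \<Phi> = (\<Sum>i\<le>2*m. monom (c i) (q^m + q^i))"
      by (simp add: \<Phi>_def sum_distrib_left mult_monom)
    also have "\<dots> = monom (c m) (q^m + q^m) + (\<Sum>j\<in>{1..m}. monom (c (m+j)) (q^m + q^(m+j)))
        + (\<Sum>j\<in>{1..m}. monom (c (m-j)) (q^m + q^(m-j)))"
      by (rule sum_split_center)
    also have "\<dots> = (\<Sum>j\<in>{1..m}. gt j m) + (\<Sum>j\<in>{1..m}. - gt j (m-j))"
    proof -
      have "monom (c (m-j)) (q^m + q^(m-j)) = - gt j (m-j)" if "j \<in> {1..m}" for j
      proof -
        have "c (m-j) = - c (2*m - (m-j))" using c_anti by simp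
        also have "2*m - (m-j) = m+j" using that by auto
        finally have "c (m-j) = - c (m+j)" .
        moreover have "m - j + j = m" using that by auto
        ultimately show ?thesis by (simp add: gt_def minus_monom add.commute)
      qed
      then show ?thesis using c_mid by (simp add: gt_def)
    qed
    finally show ?thesis by (simp add: sum_subtractf sum_negf)
  qed
  finally show ?thesis .
qed

lemma fe0: "poly fe 0 = 0"
proof -
  show ?thesis using qpos by (simp add: fe_def gt_def poly_sum poly_monom power_0_left)
qed

lemma f_fe: "f = fe"
proof -
  define g where "g = f - fe"
  have "g ^ q = f ^ q - fe ^ q" unfolding g_def by (rule frob_diff[OF frob_kp qpos])
  also have "\<dots> = g" unfolding g_def using f_eq fe_eq by (simp add: algebra_simps)
  finally have gq: "g ^ q = g" .
  have g0: "poly g 0 = 0" using f0 fe0 by (simp add: g_def)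
  show ?thesis
  proof (rule ccontr)
    assume "f \<noteq> fe"
    then have "g \<noteq> 0" by (simp add: g_def)
    then have "degree (g ^ q) = q * degree g" by (simp add: degree_power_eq)
    with gq q2 have "degree g = 0" by simp
    then have "g = [:coeff g 0:]" by (metis degree_0_id)
    also have "coeff g 0 = 0" using g0 by (simp add: poly_0_coeff_0)
    finally show False using \<open>g \<noteq> 0\<close> by simp
  qed
qed

end


context thm48 begin

abbreviation "F \<equiv> poly (map_poly \<kappa> f)"

lemma map_kappa_Phi: "map_poly \<kappa> \<Phi> = (\<Sum>i\<le>2*m. monom (\<kappa> (c i)) (q ^ i))"
  using hom_kappa by (simp add: \<Phi>_def fh_map_poly_sum fh_map_poly_monom)

lemma F_expl: "F x = (\<Sum>j\<in>{1..m}. \<Sum>k\<in>{m-j..<m}. \<kappa> (c (m+j)) * (x^(q^k) * x^(q^(k+j))))"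
  using hom_kappa
  by (simp add: f_fe fe_def gt_def fh_map_poly_sum fh_map_poly_monom poly_sum poly_monom power_add)

lemma Q_expl: "Q x = T * (x^(q^m) * x^(q^(m-1))) + F x"
  by (simp add: Q_def power_add)

definition B :: "'e \<Rightarrow> 'e \<Rightarrow> 'e" where
  "B u w = T * (u^(q^m) * w^(q^(m-1)) + w^(q^m) * u^(q^(m-1)))
     + (\<Sum>j\<in>{1..m}. \<Sum>k\<in>{m-j..<m}. \<kappa> (c (m+j)) * (u^(q^k) * w^(q^(k+j)) + w^(q^k) * u^(q^(k+j))))"

lemma Q_add: "Q (u + w) = Q u + Q w + B u w"
proof -
  have "F (u + w) = F u + F w + (\<Sum>j\<in>{1..m}. \<Sum>k\<in>{m-j..<m}. \<kappa> (c (m+j)) * (u^(q^k) * w^(q^(k+j)) + w^(q^k) * u^(q^(k+j))))"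
    by (simp add: F_expl frob_qn_e sum.distrib[symmetric] algebra_simps)
  then show ?thesis
    by (simp add: Q_expl B_def frob_qn_e algebra_simps)
qed

lemma Q_smul: "Q (\<kappa> a * u) = \<kappa> a ^ 2 * Q u"
  by (simp add: Q_expl F_expl power_mult_distrib kappa_pow sum_distrib_left algebra_simps power2_eq_square)

lemma B_add: "B (u + v) w = B u w + B v w"
  by (simp add: B_def frob_qn_e sum.distrib[symmetric] algebra_simps)

lemma B_smul: "B (\<kappa> a * u) w = \<kappa> a * B u w"
  by (simp add: B_def power_mult_distrib kappa_pow sum_distrib_left algebra_simps)

lemma B_sym: "B u w = B w u"
  by (simp add: B_def algebra_simps)

lemma Q_pow: "x \<in> V \<Longrightarrow> Q x ^ q = Q x"
proof -
  assume xV: "x \<in> V"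
  define S where "S = (\<Sum>i\<le>2*m. \<kappa> (c i) * x^(q^i))"
  have fq: "f ^ q = f + monom 1 (q ^ m) * \<Phi>" using f_eq by (simp add: algebra_simps)
  have "F x ^ q = poly (map_poly \<kappa> (f ^ q)) x"
    using hom_kappa by (simp add: fh_map_poly_power)
  also have "\<dots> = F x + x^(q^m) * S"
    using hom_kappa by (simp add: fq fh_map_poly_add fh_map_poly_mult fh_map_poly_monom fh_1
        map_kappa_Phi poly_sum poly_monom S_def)
  finally have Fq: "F x ^ q = F x + x^(q^m) * S" .
  have e: "(x^(q^m)) ^ q * (x^(q^(m-1))) ^ q = x^(q^(m+1)) * x^(q^m)"
  proof -
    have "q^(m-1) * q = q^m" using m2 by (metis Suc_diff_1 less_le_trans pos2 power_Suc2 m2 less_2_cases_iff le_less_trans not_less)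
    then show ?thesis
      by (simp add: power_mult[symmetric] power_Suc2 del: power_Suc)
  qed
  have "Q x ^ q = T^q * (x^(q^(m+1)) * x^(q^m)) + F x + x^(q^m) * S"
    by (simp only: Q_expl frob_e power_mult_distrib e Fq add.assoc)
  also have "\<dots> = Q x + x^(q^m) * poly P x"
    by (simp only: Q_expl poly_P S_def[symmetric]) (simp add: algebra_simps)
  also have "poly P x = 0" using xV by (simp add: V_def)
  finally show ?thesis by simp
qed

lemma in_range_kappa:
  assumes "(x::'e) ^ q = x" shows "\<exists>a. x = \<kappa> a"
proof (rule ccontr)
  assume nx: "\<not> (\<exists>a. x = \<kappa> a)"
  define R :: "'e poly" where "R = monom 1 q - [:0, 1:]"
  have cR: "coeff R q = 1" using q2 by (simp add: R_def coeff_pCons split: nat.splits)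
  then have nz: "R \<noteq> 0" by auto
  have "degree R \<le> q"
    unfolding R_def using q2 by (intro degree_diff_le) (auto simp: degree_monom_le)
  have roots: "poly R y = 0 \<longleftrightarrow> y ^ q = y" for y by (simp add: R_def poly_monom)
  have sub: "insert x (range \<kappa>) \<subseteq> {y. poly R y = 0}"
    using assms by (auto simp: roots kappa_pow_q)
  have inj: "inj \<kappa>" using fh_inj[OF hom_kappa] by (auto simp: inj_def)
  have "card (range \<kappa>) = q" using card_image[OF inj] q_def by simp
  then have "card (insert x (range \<kappa>)) = Suc q" using nx by (subst card_insert_disjoint) auto
  moreover have "card (insert x (range \<kappa>)) \<le> card {y. poly R y = 0}"
    by (rule card_mono[OF poly_roots_finite[OF nz] sub])
  ultimately have "Suc q \<le> card {y. poly R y = 0}" by simp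
  also have "\<dots> \<le> degree R" by (rule card_poly_roots_bound[OF nz])
  finally show False using \<open>degree R \<le> q\<close> by simp
qed

lemma Q_range: "x \<in> V \<Longrightarrow> \<exists>a. Q x = \<kappa> a"
  using in_range_kappa Q_pow by blast

definition Qk :: "'e \<Rightarrow> 'k" where "Qk x = (SOME a. \<kappa> a = Q x)"

lemma Qk_eq: "Q x = \<kappa> b \<Longrightarrow> Qk x = b"
  unfolding Qk_def by (rule some_equality) (auto dest: fh_inj[OF hom_kappa])

lemma Qk_V: "x \<in> V \<Longrightarrow> Q x = \<kappa> (Qk x)"
  using Q_range Qk_eq by metis

definition Ck :: "'e \<Rightarrow> 'e \<Rightarrow> 'k" where "Ck u w = Qk (u + w) - Qk u - Qk w"

lemma Ck_B: "u \<in> V \<Longrightarrow> w \<in> V \<Longrightarrow> \<kappa> (Ck u w) = B u w"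
  using hom_kappa V_add[of u w]
  by (simp add: Ck_def fh_diff Qk_V[symmetric] Q_add)

end


context thm48 begin

definition Bp :: "'e \<Rightarrow> 'e poly" where
  "Bp u = monom (T * u^(q^m)) (q^(m-1)) + monom (T * u^(q^(m-1))) (q^m)
     + (\<Sum>j\<in>{1..m}. \<Sum>k\<in>{m-j..<m}. monom (\<kappa> (c (m+j)) * u^(q^k)) (q^(k+j))
                                      + monom (\<kappa> (c (m+j)) * u^(q^(k+j))) (q^k))"

lemma poly_Bp: "poly (Bp u) w = B u w"
  by (simp add: Bp_def B_def poly_sum poly_monom algebra_simps)

lemma le_N: "e \<le> 2*m - 1 \<Longrightarrow> q^e \<le> q^(2*m-1)"
  using q1 by (intro power_increasing) auto

lemma degree_Bp: "degree (Bp u) \<le> q^(2*m-1)"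
proof -
  have a: "degree (monom a (q^e)) \<le> q^(2*m-1)" if "e \<le> 2*m-1" for a :: 'e and e
    using degree_monom_le le_N[OF that] order.trans by blast
  show ?thesis
    unfolding Bp_def using m2
    by (intro degree_add_le degree_sum_le a finite_atLeastLessThan finite_atLeastAtMost) auto
qed

lemma coeff_Bp: "coeff (Bp u) (q^(2*m-1)) = u^(q^(m-1))"
proof -
  let ?N = "q^(2*m-1)"
  have n1: "q^(m-1) \<noteq> ?N" "q^m \<noteq> ?N" using m2 q1 by auto
  have inner: "(\<Sum>k\<in>{m-j..<m}. coeff (monom (\<kappa> (c (m+j)) * u^(q^k)) (q^(k+j))
                                      + monom (\<kappa> (c (m+j)) * u^(q^(k+j))) (q^k)) ?N)
      = (if j = m then u^(q^(m-1)) else 0)" if j: "j \<in> {1..m}" for j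
  proof -
    have "(\<Sum>k\<in>{m-j..<m}. coeff (monom (\<kappa> (c (m+j)) * u^(q^k)) (q^(k+j))
                                      + monom (\<kappa> (c (m+j)) * u^(q^(k+j))) (q^k)) ?N)
        = (\<Sum>k\<in>{m-j..<m}. if k = m - 1 then (if j = m then \<kappa> (c (m+j)) * u^(q^k) else 0) else 0)"
    proof (intro sum.cong refl)
      fix k assume k: "k \<in> {m-j..<m}"
      have "k \<noteq> 2*m-1" using k m2 by auto
      then have "q^k \<noteq> ?N" using q1 by simp
      moreover have "(k + j = 2*m-1) \<longleftrightarrow> (k = m-1 \<and> j = m)" using k j m2 by auto
      ultimately show "coeff (monom (\<kappa> (c (m+j)) * u^(q^k)) (q^(k+j))
                                      + monom (\<kappa> (c (m+j)) * u^(q^(k+j))) (q^k)) ?N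
           = (if k = m - 1 then (if j = m then \<kappa> (c (m+j)) * u^(q^k) else 0) else 0)"
        using q1 by auto
    qed
    also have "\<dots> = (if j = m then \<kappa> (c (m+j)) * u^(q^(m-1)) else 0)"
      using j m2 by (simp add: sum.delta)
    also have "\<dots> = (if j = m then u^(q^(m-1)) else 0)"
      using c_top fh_1[OF hom_kappa] by (simp add: mult_2)
    finally show ?thesis .
  qed
  have "coeff (Bp u) ?N = (\<Sum>j\<in>{1..m}. \<Sum>k\<in>{m-j..<m}. coeff (monom (\<kappa> (c (m+j)) * u^(q^k)) (q^(k+j))
                                      + monom (\<kappa> (c (m+j)) * u^(q^(k+j))) (q^k)) ?N)"
    using n1 by (simp only: Bp_def coeff_add coeff_sum) simp
  also have "\<dots> = (\<Sum>j\<in>{1..m}. if j = m then u^(q^(m-1)) else 0)"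
    by (intro sum.cong refl inner)
  also have "\<dots> = u^(q^(m-1))" using m2 by simp
  finally show ?thesis .
qed

lemma nondeg: "u \<in> V \<Longrightarrow> \<forall>w\<in>V. B u w = 0 \<Longrightarrow> u = 0"
proof -
  assume uV: "u \<in> V" and B0: "\<forall>w\<in>V. B u w = 0"
  have "Bp u = 0"
  proof (rule ccontr)
    assume nz: "Bp u \<noteq> 0"
    have "V \<subseteq> {w. poly (Bp u) w = 0}" using B0 by (auto simp: poly_Bp)
    then have "card V \<le> card {w. poly (Bp u) w = 0}"
      by (intro card_mono) (simp_all add: poly_roots_finite[OF nz])
    also have "\<dots> \<le> degree (Bp u)" by (rule card_poly_roots_bound[OF nz])
    also have "\<dots> \<le> q^(2*m-1)" by (rule degree_Bp)
    finally have "q^(2*m) \<le> q^(2*m-1)" by (simp add: card_V)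
    moreover have "q^(2*m-1) < q^(2*m)" using q1 m2 by (intro power_strict_increasing) auto
    ultimately show False by simp
  qed
  then have "coeff (Bp u) (q^(2*m-1)) = 0" by simp
  then have "u^(q^(m-1)) = 0" using coeff_Bp[of u] by simp
  then show "u = 0" using qpos by simp
qed

lemma galois_V: "\<sigma> \<in> galois_group \<iota> \<Longrightarrow> x \<in> V \<Longrightarrow> \<sigma> x \<in> V"
proof -
  assume s: "\<sigma> \<in> galois_group \<iota>" and xV: "x \<in> V"
  have hs: "field_hom \<sigma>" and fx: "\<And>y. \<sigma> (\<iota> y) = \<iota> y" using s by (auto simp: galois_group_def)
  have comp: "\<sigma> \<circ> \<iota> = \<iota>" using fx by auto
  have "\<sigma> (poly P x) = poly P (\<sigma> x)"
    using fh_poly_map[OF hs hom_iota] comp by simp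
  with xV fh_0[OF hs] show ?thesis by (simp add: V_def)
qed

lemma galois_Q: "\<sigma> \<in> galois_group \<iota> \<Longrightarrow> \<sigma> (Q x) = Q (\<sigma> x)"
proof -
  assume s: "\<sigma> \<in> galois_group \<iota>"
  have hs: "field_hom \<sigma>" and fx: "\<And>y. \<sigma> (\<iota> y) = \<iota> y" using s by (auto simp: galois_group_def)
  have comp: "\<sigma> \<circ> \<kappa> = \<kappa>" using fx by (auto simp: \<kappa>_def)
  have "\<sigma> (F x) = F (\<sigma> x)"
    using fh_poly_map[OF hs hom_kappa] comp by simp
  then show ?thesis
    by (simp add: Q_def fh_add[OF hs] fh_mult[OF hs] fh_power[OF hs] fx)
qed

theorem main:
  "\<exists>Qk :: 'e \<Rightarrow> 'k.
           (\<forall>\<alpha>\<in>V. Q \<alpha> = \<kappa> (Qk \<alpha>)) \<and>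
           quadratic_form_on V (\<lambda>a v. \<kappa> a * v) Qk \<and>
           nondegenerate_quadratic_form_on V (\<lambda>a v. \<kappa> a * v) Qk \<and>
           (\<forall>\<sigma>\<in>galois_group \<iota>. \<forall>\<alpha>\<in>V. Qk (\<sigma> \<alpha>) = Qk \<alpha>)"
proof (intro exI[of _ Qk] conjI)
  have hk: "field_hom \<kappa>" by (rule hom_kappa)
  show "\<forall>\<alpha>\<in>V. Q \<alpha> = \<kappa> (Qk \<alpha>)" using Qk_V by blast
  have bil: "bilinear_on V (\<lambda>a v. \<kappa> a * v) Ck"
    unfolding bilinear_on_def
  proof (intro conjI ballI allI)
    fix u v w assume uV: "u \<in> V" and vV: "v \<in> V" and wV: "w \<in> V"
    have uvV: "u + v \<in> V" using uV vV by (rule V_add)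
    show "Ck (u + v) w = Ck u w + Ck v w"
      using uV vV wV uvV
      by (intro fh_inj[OF hk]) (simp add: fh_add[OF hk] Ck_B B_add)
    show "Ck w (u + v) = Ck w u + Ck w v"
      using uV vV wV uvV
      by (intro fh_inj[OF hk]) (simp add: fh_add[OF hk] Ck_B B_add B_sym[of w])
  next
    fix a u w assume uV: "u \<in> V" and wV: "w \<in> V"
    have auV: "\<kappa> a * u \<in> V" using uV by (rule V_smul)
    show "Ck (\<kappa> a * u) w = a * Ck u w"
      using uV wV auV
      by (intro fh_inj[OF hk]) (simp add: fh_mult[OF hk] Ck_B B_smul)
    show "Ck w (\<kappa> a * u) = a * Ck w u"
      using uV wV auV
      by (intro fh_inj[OF hk]) (simp add: fh_mult[OF hk] Ck_B B_smul B_sym[of w])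
  qed
  have sym: "\<forall>u\<in>V. \<forall>w\<in>V. Ck u w = Ck w u" by (simp add: Ck_def add.commute)
  have spl: "\<forall>u\<in>V. \<forall>w\<in>V. Qk (u + w) = Qk u + Qk w + Ck u w" by (simp add: Ck_def)
  show "quadratic_form_on V (\<lambda>a v. \<kappa> a * v) Qk"
    unfolding quadratic_form_on_def
  proof (intro conjI allI ballI exI[of _ Ck])
    fix a v assume vV: "v \<in> V"
    show "Qk (\<kappa> a * v) = a ^ 2 * Qk v"
      using vV hk by (intro Qk_eq) (simp add: Q_smul Qk_V[OF vV] fh_mult fh_power)
  qed (use bil sym spl in auto)
  show "nondegenerate_quadratic_form_on V (\<lambda>a v. \<kappa> a * v) Qk"
    unfolding nondegenerate_quadratic_form_on_def
  proof (intro conjI allI ballI exI[of _ Ck] impI)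
    fix u assume uV: "u \<in> V" and h: "\<forall>w\<in>V. Ck u w = 0"
    have "\<forall>w\<in>V. B u w = 0"
      using h uV by (auto simp: Ck_B[symmetric] fh_0[OF hk])
    then show "u = 0" using nondeg uV by blast
  qed (use bil sym spl in auto)
  show "\<forall>\<sigma>\<in>galois_group \<iota>. \<forall>\<alpha>\<in>V. Qk (\<sigma> \<alpha>) = Qk \<alpha>"
  proof (intro ballI)
    fix \<sigma> \<alpha> assume s: "\<sigma> \<in> galois_group \<iota>" and aV: "\<alpha> \<in> V"
    have hs: "field_hom \<sigma>" and fx: "\<And>y. \<sigma> (\<iota> y) = \<iota> y" using s by (auto simp: galois_group_def)
    have "Q (\<sigma> \<alpha>) = \<sigma> (Q \<alpha>)" using galois_Q[OF s] by simp
    also have "\<dots> = \<sigma> (\<kappa> (Qk \<alpha>))" using Qk_V[OF aV] by simp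
    also have "\<dots> = \<kappa> (Qk \<alpha>)" using fx by (simp add: \<kappa>_def)
    finally show "Qk (\<sigma> \<alpha>) = Qk \<alpha>" by (rule Qk_eq)
  qed
qed

end


theorem theorem4p8:
  fixes c :: "nat \<Rightarrow> 'k::{field,finite}"
    and m :: nat
    and \<iota> :: "'k poly fract \<Rightarrow> 'e::field"
    and f :: "'k poly"
  defines "q \<equiv> card (UNIV :: 'k set)"
  defines "\<Phi> \<equiv> (\<Sum>i\<le>2*m. monom (c i) (q ^ i))"
  defines "t \<equiv> to_fract [:0, 1:] :: 'k poly fract"
  defines "L \<equiv> (\<Sum>i\<le>2*m. monom (to_fract [:c i:]) (q ^ i))
                + monom (t ^ q) (q ^ (m + 1)) - monom t (q ^ (m - 1))"
  defines "V \<equiv> {\<alpha>::'e. poly (map_poly \<iota> L) \<alpha> = 0}"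
  defines "\<kappa> \<equiv> (\<lambda>a::'k. \<iota> (to_fract [:a:]))"
  defines "Q \<equiv> (\<lambda>\<alpha>::'e. \<iota> t * \<alpha> ^ (q ^ m + q ^ (m - 1)) + poly (map_poly \<kappa> f) \<alpha>)"
  assumes m2: "m \<ge> 2"
    and c_top: "c (2*m) = 1"
    and c_anti: "\<forall>i\<le>m. c i = - c (2*m - i)"
    and c_mid: "c m = 0"
    and f0: "poly f 0 = 0"
    and f_eq: "f ^ q - f = monom 1 (q ^ m) * \<Phi>"
    and split: "is_splitting_field \<iota> L"
  shows "\<exists>Qk :: 'e \<Rightarrow> 'k.
           (\<forall>\<alpha>\<in>V. Q \<alpha> = \<kappa> (Qk \<alpha>)) \<and>
           quadratic_form_on V (\<lambda>a v. \<kappa> a * v) Qk \<and>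
           nondegenerate_quadratic_form_on V (\<lambda>a v. \<kappa> a * v) Qk \<and>
           (\<forall>\<sigma>\<in>galois_group \<iota>. \<forall>\<alpha>\<in>V. Qk (\<sigma> \<alpha>) = Qk \<alpha>)"
proof -
  note A = assms
  interpret thm48 c m \<iota> f q \<Phi> t L V \<kappa> Q
    by unfold_locales (fact A | simp only: q_def \<Phi>_def t_def L_def V_def \<kappa>_def Q_def; fail)+
  show ?thesis by (rule main)
qed


end
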